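(* Let $d\ge1$, $n\ge3$, $u\in\mathbb{C}\setminus\{0\}$. The algebra $\mathrm{FTL}_{d,n}(u)$ is the algebra generated by $t_1,\ldots,t_n,g_1,\ldots,g_{n-1}$ subject to the defining relations of $\mathrm{Y}_{d,n}(u)$ together with the single relation $r_{1,2}=0$.
   Context: The Yokonuma–Hecke algebra $\mathrm{Y}_{d,n}(u)$ is the unital associative $\mathbb{C}$-algebra with generators $g_1,\ldots,g_{n-1},t_1,\ldots,t_n$ and relations: $g_ig_j=g_jg_i$ for $|i-j|>1$; $g_{i+1}g_ig_{i+1}=g_ig_{i+1}g_i$; $t_it_j=t_jt_i$; $t_i^d=1$; $g_it_i=t_{i+1}g_i$; $g_it_{i+1}=t_ig_i$; $g_it_j=t_jg_i$ for $j\ne i,i+1$; $g_i^2=1+(u-1)e_i+(u-1)e_ig_i$, where $e_i=\frac1d\sum_{s=0}^{d-1}t_i^st_{i+1}^{d-s}$. For $w\in S_n$ with reduced expression $s_{i_1}\cdots s_{i_k}$ put $g_w=g_{i_1}\cdots g_{i_k}$; $g_{i,i+1}=\sum_{w\in\langle s_i,s_{i+1}\rangle}g_w$ and $r_{i,i+1}=\sum_{a,b=0}^{d-1}t_i^{a}t_{i+1}^{b-a}t_{i+2}^{-b}\,g_{i,i+1}$. $\mathrm{FTL}_{d,n}(u)$ is defined as the quotient of $\mathrm{Y}_{d,n}(u)$ by the two-sided ideal generated by all $r_{i,i+1}$, $1\le i\le n-2$. *)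

theory Defs
  imports Complex_Main
begin

text \<open>A unital associative complex algebra is modelled by a type of class ring_1
(not necessarily commutative) together with a unital ring homomorphism sc
from the complex numbers into the centre (the scalar action is c.x = sc c * x).\<close>

definition cscalars :: "(complex \<Rightarrow> 'a::ring_1) \<Rightarrow> bool" where
  "cscalars sc \<longleftrightarrow> sc 1 = 1 \<and> (\<forall>a b. sc (a + b) = sc a + sc b)
     \<and> (\<forall>a b. sc (a * b) = sc a * sc b) \<and> (\<forall>a x. sc a * x = x * sc a)"

text \<open>Integer powers of an element x with x^d = 1: x^k := x^(k mod d).\<close>
definition tpow :: "nat \<Rightarrow> 'a::ring_1 \<Rightarrow> int \<Rightarrow> 'a" where
  "tpow d x k = x ^ nat (k mod int d)"

definition YH_e :: "(complex \<Rightarrow> 'a::ring_1) \<Rightarrow> nat \<Rightarrow> (nat \<Rightarrow> 'a) \<Rightarrow> nat \<Rightarrow> 'a" where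
  "YH_e sc d t i = sc (1 / of_nat d) * (\<Sum>s<d. t i ^ s * t (Suc i) ^ (d - s))"

text \<open>Sum of g_w over the parabolic subgroup generated by s_i, s_(i+1) (six elements).\<close>
definition YH_gg :: "(nat \<Rightarrow> 'a::ring_1) \<Rightarrow> nat \<Rightarrow> 'a" where
  "YH_gg g i = 1 + g i + g (Suc i) + g i * g (Suc i) + g (Suc i) * g i
              + g i * g (Suc i) * g i"

definition YH_r :: "nat \<Rightarrow> (nat \<Rightarrow> 'a::ring_1) \<Rightarrow> (nat \<Rightarrow> 'a) \<Rightarrow> nat \<Rightarrow> 'a" where
  "YH_r d g t i = (\<Sum>a<d. \<Sum>b<d. t i ^ a * tpow d (t (Suc i)) (int b - int a)
                                    * tpow d (t (i + 2)) (- int b)) * YH_gg g i"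

definition YH_rels :: "(complex \<Rightarrow> 'a::ring_1) \<Rightarrow> nat \<Rightarrow> nat \<Rightarrow> complex
                        \<Rightarrow> (nat \<Rightarrow> 'a) \<Rightarrow> (nat \<Rightarrow> 'a) \<Rightarrow> bool" where
  "YH_rels sc d n u g t \<longleftrightarrow>
     (\<forall>i j. 1 \<le> i \<and> i \<le> n - 1 \<and> 1 \<le> j \<and> j \<le> n - 1 \<and> (i + 1 < j \<or> j + 1 < i)
            \<longrightarrow> g i * g j = g j * g i)
   \<and> (\<forall>i. 1 \<le> i \<and> i \<le> n - 2 \<longrightarrow> g (i+1) * g i * g (i+1) = g i * g (i+1) * g i)
   \<and> (\<forall>i j. 1 \<le> i \<and> i \<le> n \<and> 1 \<le> j \<and> j \<le> n \<longrightarrow> t i * t j = t j * t i)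
   \<and> (\<forall>i. 1 \<le> i \<and> i \<le> n \<longrightarrow> t i ^ d = 1)
   \<and> (\<forall>i. 1 \<le> i \<and> i \<le> n - 1 \<longrightarrow> g i * t i = t (i+1) * g i)
   \<and> (\<forall>i. 1 \<le> i \<and> i \<le> n - 1 \<longrightarrow> g i * t (i+1) = t i * g i)
   \<and> (\<forall>i j. 1 \<le> i \<and> i \<le> n - 1 \<and> 1 \<le> j \<and> j \<le> n \<and> j \<noteq> i \<and> j \<noteq> i + 1
            \<longrightarrow> g i * t j = t j * g i)
   \<and> (\<forall>i. 1 \<le> i \<and> i \<le> n - 1 \<longrightarrow>
        g i ^ 2 = 1 + sc (u - 1) * YH_e sc d t i + sc (u - 1) * YH_e sc d t i * g i)"

end

theory Submission
  imports Defs
begin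

lemma comm_pow_r: "(a::'a::ring_1) * b = b * a \<Longrightarrow> a * b ^ k = b ^ k * a"
  by (induction k) (simp_all, metis mult.assoc)

lemma comm_pow_mult: "(a::'a::ring_1) * b = b * a \<Longrightarrow> (a * b) ^ k = a ^ k * b ^ k"
proof (induction k)
  case 0 then show ?case by simp
next
  case (Suc k)
  have c: "b * a ^ k = a ^ k * b" using comm_pow_r[of b a k] Suc.prems by simp
  have "(a*b)^Suc k = a * b * (a^k * b^k)" using Suc by simp
  also have "\<dots> = a * (b * a^k) * b^k" by (simp add: mult.assoc)
  also have "\<dots> = a^Suc k * b^Suc k" using c by (simp add: mult.assoc)
  finally show ?case .
qed

lemma sum_pow_shift:
  assumes "(x::'a::ring_1) ^ d = 1" "d \<ge> 1"
  shows "x * (\<Sum>s<d. x ^ s) = (\<Sum>s<d. x ^ s)"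
proof -
  obtain d' where d: "d = Suc d'" using assms(2) by (cases d) auto
  have "x * (\<Sum>s<d. x ^ s) = (\<Sum>s<d. x ^ Suc s)" by (simp add: sum_distrib_left)
  also have "\<dots> = (\<Sum>s<d'. x ^ Suc s) + x ^ d" by (simp add: d)
  also have "\<dots> = (\<Sum>s<Suc d'. x ^ s)" using assms(1)
    by (simp add: sum.lessThan_Suc_shift del: sum.lessThan_Suc)
  finally show ?thesis by (simp add: d)
qed

lemma idem_sum:
  fixes a b :: "'a::ring_1"
  assumes ab: "a * b = b * a" and ad: "a ^ d = 1" and bd: "b ^ d = 1" and d1: "d \<ge> 1"
  shows "(\<Sum>s<d. a ^ s * b ^ (d - s)) * (\<Sum>s<d. a ^ s * b ^ (d - s))
         = of_nat d * (\<Sum>s<d. a ^ s * b ^ (d - s))"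
proof -
  define y where "y = b ^ (d - 1)"
  define x where "x = a * y"
  have ay: "a * y = y * a" unfolding y_def using comm_pow_r[OF ab] by simp
  have by_: "b ^ (d - s) = y ^ s" if "s < d" for s
  proof (cases s)
    case 0 then show ?thesis using bd by simp
  next
    case (Suc s')
    have "(d - 1) * s = (d - s) + d * s'" using that Suc by (simp add: algebra_simps)
    then have "y ^ s = b ^ (d - s) * (b ^ d) ^ s'"
      unfolding y_def by (simp add: power_mult[symmetric] power_add)
    then show ?thesis using bd by simp
  qed
  have S: "(\<Sum>s<d. a ^ s * b ^ (d - s)) = (\<Sum>s<d. x ^ s)"
    unfolding x_def by (rule sum.cong) (simp_all add: by_ comm_pow_mult[OF ay])
  have xd: "x ^ d = 1"
  proof -
    have "x ^ d = a ^ d * y ^ d" unfolding x_def by (rule comm_pow_mult[OF ay])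
    also have "y ^ d = (b ^ d) ^ (d - 1)" unfolding y_def
      by (simp add: power_mult[symmetric] mult.commute)
    finally show ?thesis using ad bd by simp
  qed
  have xk: "x ^ k * (\<Sum>s<d. x ^ s) = (\<Sum>s<d. x ^ s)" for k
  proof (induction k)
    case 0 then show ?case by simp
  next
    case (Suc k)
    have "x ^ Suc k * (\<Sum>s<d. x ^ s) = x ^ k * (x * (\<Sum>s<d. x ^ s))"
      by (simp add: mult.assoc[symmetric] power_commutes)
    then show ?case using Suc sum_pow_shift[OF xd d1] by simp
  qed
  have "(\<Sum>s<d. x ^ s) * (\<Sum>s<d. x ^ s) = (\<Sum>s<d. x ^ s * (\<Sum>s<d. x ^ s))"
    by (simp add: sum_distrib_right)
  also have "\<dots> = of_nat d * (\<Sum>s<d. x ^ s)" by (simp add: xk)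
  finally show ?thesis using S by simp
qed

fun Dp :: "(nat \<Rightarrow> 'a::ring_1) \<Rightarrow> nat \<Rightarrow> 'a" where
  "Dp g 0 = 1"
| "Dp g (Suc m) = g (Suc m) * Dp g m"

lemma cj_mult: "(X::'a::ring_1) * D = D * X' \<Longrightarrow> Y * D = D * Y' \<Longrightarrow> (X * Y) * D = D * (X' * Y')"
  by (metis mult.assoc)
lemma cj_add: "(X::'a::ring_1) * D = D * X' \<Longrightarrow> Y * D = D * Y' \<Longrightarrow> (X + Y) * D = D * (X' + Y')"
  by (simp add: distrib_left distrib_right)
lemma cj_one: "1 * D = D * (1::'a::ring_1)" by simp
lemma cj_pow: "(X::'a::ring_1) * D = D * X' \<Longrightarrow> X ^ k * D = D * X' ^ k"
proof (induction k)
  case 0 then show ?case by simp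
next
  case (Suc k)
  have "X ^ Suc k * D = X * (X ^ k * D)" by (simp add: mult.assoc)
  also have "\<dots> = D * X' ^ Suc k" using Suc by (metis mult.assoc power_Suc)
  finally show ?case .
qed
lemma cj_sum: "(\<And>a. a \<in> A \<Longrightarrow> (f a::'a::ring_1) * D = D * f' a) \<Longrightarrow> sum f A * D = D * sum f' A"
  by (simp add: sum_distrib_left sum_distrib_right)

context
  fixes sc :: "complex \<Rightarrow> 'a::ring_1" and g t :: "nat \<Rightarrow> 'a"
    and d n :: nat and u :: complex
  assumes d1: "d \<ge> 1" and n3: "n \<ge> 3" and u0: "u \<noteq> 0"
    and cs: "cscalars sc"
    and Y: "YH_rels sc d n u g t"
begin

lemma gcomm: "1 \<le> i \<Longrightarrow> i \<le> n - 1 \<Longrightarrow> 1 \<le> j \<Longrightarrow> j \<le> n - 1 \<Longrightarrow> i + 1 < j \<or> j + 1 < i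
   \<Longrightarrow> g i * g j = g j * g i"
  using Y unfolding YH_rels_def by blast
lemma braid: "1 \<le> i \<Longrightarrow> i \<le> n - 2 \<Longrightarrow> g (i+1) * g i * g (i+1) = g i * g (i+1) * g i"
  using Y unfolding YH_rels_def by blast
lemma tcomm: "1 \<le> i \<Longrightarrow> i \<le> n \<Longrightarrow> 1 \<le> j \<Longrightarrow> j \<le> n \<Longrightarrow> t i * t j = t j * t i"
  using Y unfolding YH_rels_def by blast
lemma tpd: "1 \<le> i \<Longrightarrow> i \<le> n \<Longrightarrow> t i ^ d = 1"
  using Y unfolding YH_rels_def by blast
lemma gt2: "1 \<le> i \<Longrightarrow> i \<le> n - 1 \<Longrightarrow> g i * t (i+1) = t i * g i"
  using Y unfolding YH_rels_def by blast
lemma gt3: "1 \<le> i \<Longrightarrow> i \<le> n - 1 \<Longrightarrow> 1 \<le> j \<Longrightarrow> j \<le> n \<Longrightarrow> j \<noteq> i \<Longrightarrow> j \<noteq> i + 1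
   \<Longrightarrow> g i * t j = t j * g i"
  using Y unfolding YH_rels_def by blast
lemma quad: "1 \<le> i \<Longrightarrow> i \<le> n - 1 \<Longrightarrow>
        g i ^ 2 = 1 + sc (u - 1) * YH_e sc d t i + sc (u - 1) * YH_e sc d t i * g i"
  using Y unfolding YH_rels_def by blast

lemma sc_add: "sc (a + b) = sc a + sc b" using cs unfolding cscalars_def by blast
lemma sc_mult: "sc (a * b) = sc a * sc b" using cs unfolding cscalars_def by blast
lemma sc_comm: "sc a * x = x * sc a" using cs unfolding cscalars_def by blast
lemma sc_1: "sc 1 = 1" using cs unfolding cscalars_def by blast
lemma sc_0: "sc 0 = 0"
proof -
  have "sc (0 + 0) = sc 0 + sc 0" by (rule sc_add)
  then show ?thesis by simp
qed
lemma sc_nat: "sc (of_nat k) = of_nat k"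
  by (induction k) (simp_all add: sc_0 sc_add sc_1)

lemma e_idem: "1 \<le> i \<Longrightarrow> i \<le> n - 1 \<Longrightarrow> YH_e sc d t i * YH_e sc d t i = YH_e sc d t i"
proof -
  assume i: "1 \<le> i" "i \<le> n - 1"
  define S where "S = (\<Sum>s<d. t i ^ s * t (Suc i) ^ (d - s))"
  have SS: "S * S = of_nat d * S" unfolding S_def
    by (rule idem_sum) (use i n3 d1 in \<open>auto intro: tcomm tpd\<close>)
  have "YH_e sc d t i * YH_e sc d t i = sc (1 / of_nat d) * S * (sc (1 / of_nat d) * S)"
    unfolding YH_e_def S_def by simp
  also have "\<dots> = sc (1 / of_nat d) * sc (1 / of_nat d) * (S * S)"
    by (metis mult.assoc sc_comm)
  also have "\<dots> = sc (1 / of_nat d * (1 / of_nat d) * of_nat d) * S"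
    by (simp only: SS sc_nat[symmetric] sc_mult mult.assoc)
  also have "1 / of_nat d * (1 / of_nat d) * of_nat d = 1 / (of_nat d :: complex)"
    using d1 by (simp add: field_simps)
  finally show ?thesis unfolding YH_e_def S_def .
qed

lemma g_linv: "1 \<le> i \<Longrightarrow> i \<le> n - 1 \<Longrightarrow> \<exists>h. h * g i = 1"
proof -
  assume i: "1 \<le> i" "i \<le> n - 1"
  define e where "e = YH_e sc d t i"
  define b where "b = sc (u - 1)"
  define a where "a = sc (1 / u - 1)"
  have ee: "e * e = e" unfolding e_def using e_idem i by simp
  have q: "g i * g i = 1 + b * e + b * e * g i"
    using quad[OF i] unfolding e_def b_def by (simp add: power2_eq_square)
  have ab: "a + b + a * b = 0"
  proof -
    have "(1 / u - 1) + (u - 1) + (1 / u - 1) * (u - 1) = 0" using u0 by (simp add: field_simps)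
    then have "sc ((1 / u - 1) + (u - 1) + (1 / u - 1) * (u - 1)) = 0" by (simp only: sc_0)
    then show ?thesis unfolding a_def b_def by (simp only: sc_add sc_mult)
  qed
  have "(1 + a * e) * (g i - b * e) * g i = (1 + a * e) * (g i * g i - b * e * g i)"
    by (simp add: mult.assoc algebra_simps)
  also have "\<dots> = (1 + a * e) * (1 + b * e)" using q by simp
  also have "\<dots> = 1 + b * e + a * e + a * (e * b) * e" by (simp add: algebra_simps mult.assoc)
  also have "e * b = b * e" unfolding b_def by (simp add: sc_comm)
  also have "1 + b * e + a * e + a * (b * e) * e = 1 + (a + b + a * b) * e"
    by (simp add: algebra_simps mult.assoc ee)
  finally have "(1 + a * e) * (g i - b * e) * g i = 1" using ab by simp
  then show ?thesis by blast
qed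

lemma D_linv: "m \<le> n - 1 \<Longrightarrow> \<exists>L. L * Dp g m = 1"
proof (induction m)
  case 0 then show ?case by auto
next
  case (Suc m)
  obtain L where L: "L * Dp g m = 1" using Suc by auto
  obtain h where h: "h * g (Suc m) = 1" using g_linv[of "Suc m"] Suc.prems by auto
  have "(L * h) * Dp g (Suc m) = L * (h * g (Suc m)) * Dp g m" by (simp add: mult.assoc)
  then show ?case using L h by auto
qed

lemma Dg_far: "m + 2 \<le> j \<Longrightarrow> j \<le> n - 1 \<Longrightarrow> g j * Dp g m = Dp g m * g j"
proof (induction m)
  case 0 then show ?case by simp
next
  case (Suc m)
  have c: "g j * g (Suc m) = g (Suc m) * g j"
    by (rule gcomm) (use Suc.prems in auto)
  have "g j * Dp g (Suc m) = g (Suc m) * (g j * Dp g m)" by (simp add: c mult.assoc[symmetric])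
  also have "\<dots> = Dp g (Suc m) * g j" using Suc by (simp add: mult.assoc)
  finally show ?case .
qed

lemma Dt_far: "m + 2 \<le> j \<Longrightarrow> j \<le> n \<Longrightarrow> t j * Dp g m = Dp g m * t j"
proof (induction m)
  case 0 then show ?case by simp
next
  case (Suc m)
  have c: "g (Suc m) * t j = t j * g (Suc m)"
    by (rule gt3) (use Suc.prems in auto)
  have "t j * Dp g (Suc m) = g (Suc m) * (t j * Dp g m)" by (simp add: c mult.assoc[symmetric])
  also have "\<dots> = Dp g (Suc m) * t j" using Suc by (simp add: mult.assoc)
  finally show ?case .
qed

lemma D_shift_g: "1 \<le> k \<Longrightarrow> k + 1 \<le> m \<Longrightarrow> m \<le> n - 1 \<Longrightarrow> Dp g m * g (k+1) = g k * Dp g m"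
proof (induction m)
  case 0 then show ?case by simp
next
  case (Suc m)
  show ?case
  proof (cases "m = k")
    case True
    obtain k' where k: "k = Suc k'" using Suc.prems by (cases k) auto
    have f: "g (k+1) * Dp g k' = Dp g k' * g (k+1)"
      by (rule Dg_far) (use Suc.prems True k in auto)
    have br: "g (k+1) * g k * g (k+1) = g k * g (k+1) * g k"
      by (rule braid) (use Suc.prems True in auto)
    have "Dp g (Suc m) * g (k+1) = g (k+1) * g k * (Dp g k' * g (k+1))"
      using True k by (simp add: mult.assoc)
    also have "\<dots> = (g (k+1) * g k * g (k+1)) * Dp g k'" by (simp only: f[symmetric] mult.assoc)
    also have "\<dots> = g k * Dp g (Suc m)" using True k br by (simp add: mult.assoc)
    finally show ?thesis .
  next
    case False
    have c: "g (Suc m) * g k = g k * g (Suc m)"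
      by (rule gcomm) (use Suc.prems False in auto)
    have "Dp g (Suc m) * g (k+1) = g (Suc m) * (Dp g m * g (k+1))" by (simp add: mult.assoc)
    also have "\<dots> = g (Suc m) * (g k * Dp g m)" using Suc False by simp
    also have "\<dots> = g k * Dp g (Suc m)" by (simp add: c mult.assoc[symmetric])
    finally show ?thesis .
  qed
qed

lemma D_shift_t: "1 \<le> j \<Longrightarrow> j \<le> m \<Longrightarrow> m \<le> n - 1 \<Longrightarrow> Dp g m * t (j+1) = t j * Dp g m"
proof (induction m)
  case 0 then show ?case by simp
next
  case (Suc m)
  show ?case
  proof (cases "Suc m = j")
    case True
    have f: "t (j+1) * Dp g m = Dp g m * t (j+1)"
      by (rule Dt_far) (use Suc.prems True in auto)
    have c: "g j * t (j+1) = t j * g j" by (rule gt2) (use Suc.prems True in auto)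
    have "Dp g (Suc m) * t (j+1) = g j * (Dp g m * t (j+1))" using True by (metis Dp.simps(2) mult.assoc)
    also have "\<dots> = (g j * t (j+1)) * Dp g m" by (simp only: f mult.assoc)
    also have "\<dots> = t j * Dp g (Suc m)" using c True by (metis Dp.simps(2) mult.assoc)
    finally show ?thesis .
  next
    case False
    have c: "g (Suc m) * t j = t j * g (Suc m)"
      by (rule gt3) (use Suc.prems False in auto)
    have "Dp g (Suc m) * t (j+1) = g (Suc m) * (Dp g m * t (j+1))" by (simp add: mult.assoc)
    also have "\<dots> = g (Suc m) * (t j * Dp g m)" using Suc False by simp
    also have "\<dots> = t j * Dp g (Suc m)" by (simp add: c mult.assoc[symmetric])
    finally show ?thesis .
  qed
qed

lemma r_conj: "1 \<le> i \<Longrightarrow> i + 1 \<le> n - 2 \<Longrightarrow>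
   YH_r d g t i * Dp g (n-1) = Dp g (n-1) * YH_r d g t (Suc i)"
proof -
  assume i: "1 \<le> i" "i + 1 \<le> n - 2"
  define D where "D = Dp g (n-1)"
  have tj: "t j * D = D * t (Suc j)" if "1 \<le> j" "j \<le> n - 1" for j
    using D_shift_t[of j "n-1"] that unfolding D_def by simp
  have gk: "g k * D = D * g (Suc k)" if "1 \<le> k" "k + 1 \<le> n - 1" for k
    using D_shift_g[of k "n-1"] that unfolding D_def by simp
  have t1: "t i * D = D * t (Suc i)" using tj i by simp
  have t2: "t (Suc i) * D = D * t (Suc (Suc i))" using tj i by simp
  have t3: "t (i + 2) * D = D * t (Suc i + 2)" using tj[of "i+2"] i by simp
  have g1: "g i * D = D * g (Suc i)" using gk i by simp
  have g2: "g (Suc i) * D = D * g (Suc (Suc i))" using gk[of "Suc i"] i by simp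
  have gg: "YH_gg g i * D = D * YH_gg g (Suc i)"
    unfolding YH_gg_def by (intro cj_add cj_mult cj_one g1 g2)
  have T: "(\<Sum>a<d. \<Sum>b<d. t i ^ a * tpow d (t (Suc i)) (int b - int a)
                                    * tpow d (t (i + 2)) (- int b)) * D
    = D * (\<Sum>a<d. \<Sum>b<d. t (Suc i) ^ a * tpow d (t (Suc (Suc i))) (int b - int a)
                                    * tpow d (t (Suc i + 2)) (- int b))"
    unfolding tpow_def by (intro cj_sum cj_mult cj_pow t1 t2 t3)
  show ?thesis unfolding D_def[symmetric] YH_r_def
    using cj_mult[OF T gg] by simp
qed

end

theorem corollary1:
  fixes sc :: "complex \<Rightarrow> 'a::ring_1" and g t :: "nat \<Rightarrow> 'a"
    and d n :: nat and u :: complex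
  assumes "d \<ge> 1" and "n \<ge> 3" and "u \<noteq> 0"
    and "cscalars sc"
    and "YH_rels sc d n u g t"
    and "YH_r d g t 1 = 0"
  shows "\<forall>i. 1 \<le> i \<and> i \<le> n - 2 \<longrightarrow> YH_r d g t i = 0"
proof -
  obtain L where L: "L * Dp g (n-1) = 1" using D_linv[OF assms(1-5)] by auto
  have "YH_r d g t (Suc k) = 0" if "k + 1 \<le> n - 2" for k
    using that
  proof (induction k)
    case 0 then show ?case using assms(6) by simp
  next
    case (Suc k)
    have "YH_r d g t (Suc k) * Dp g (n-1) = Dp g (n-1) * YH_r d g t (Suc (Suc k))"
      by (rule r_conj[OF assms(1-5)]) (use Suc.prems in auto)
    then have "Dp g (n-1) * YH_r d g t (Suc (Suc k)) = 0" using Suc by simp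
    then have "L * Dp g (n-1) * YH_r d g t (Suc (Suc k)) = 0" by (simp add: mult.assoc)
    then show ?case using L by simp
  qed
  then show ?thesis by (metis Suc_eq_plus1 Suc_le_D le_SucE le_numeral_extra(4) One_nat_def)
qed

end
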